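(* Let $\sigma,\tau,\theta,\eta\in\mathbb{R}$ and $q\in(-1,1]$. Define $\lambda_0=0$ and $\lambda_{n+1}=\frac{1+q\lambda_n}{1-\sigma\tau\lambda_n}$ for $n\ge 0$, and assume that this sequence is well defined (i.e. $1-\sigma\tau\lambda_n\neq 0$ for all $n\ge0$) and that $\lambda_n\neq 0$ for all $n\ge 1$. Let $(\alpha_n)_{n\ge0},(\beta_n)_{n\ge0},(\gamma_n)_{n\ge0},(\delta_n)_{n\ge0},(\varepsilon_n)_{n\ge1},(\varphi_n)_{n\ge1}$ be real sequences satisfying the system (E1)–(E5) described in the context, with initial conditions $\alpha_0=\gamma_0=\delta_0=\varphi_1=0$, $\beta_0=\varepsilon_1=1$, and such that $(\alpha_n,\beta_n)\neq(0,0)$ for all $n\ge0$ and $(\varepsilon_n,\varphi_n)\neq(0,0)$ for all $n\ge1$. Then $\alpha_n=\sigma\lambda_n\beta_n$ for all $n\ge0$ and $\varphi_n=\tau\lambda_{n-1}\varepsilon_n$ for all $n\ge1$.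
   Context: The system (E1)–(E5) is: (E1) for $n\ge0$: $\tau\alpha_n\alpha_{n+1}+q\alpha_n\beta_{n+1}+\sigma\beta_n\beta_{n+1}=\alpha_{n+1}\beta_n$; (E2) for $n\ge2$: $\tau\varepsilon_{n-1}\varepsilon_n+q\varepsilon_n\varphi_{n-1}+\sigma\varphi_n\varphi_{n-1}=\varepsilon_{n-1}\varphi_n$; (E3) for $n\ge0$: $\theta\alpha_n+\eta\beta_n+\tau\alpha_n(\gamma_n+\gamma_{n+1})+\sigma\beta_n(\delta_n+\delta_{n+1})+q(\alpha_n\delta_{n+1}+\beta_n\gamma_n)=\beta_n\gamma_{n+1}+\alpha_n\delta_n$; (E4) for $n\ge1$: $\theta\varepsilon_n+\eta\varphi_n+\tau\varepsilon_n(\gamma_n+\gamma_{n-1})+\sigma\varphi_n(\delta_{n-1}+\delta_n)+q(\varphi_n\gamma_n+\delta_{n-1}\varepsilon_n)=\varepsilon_n\delta_n+\varphi_n\gamma_{n-1}$; (E5) for $n\ge1$: $1+\theta\gamma_n+\eta\delta_n+\tau\gamma_n^2+\sigma\delta_n^2+\tau(\alpha_{n-1}\varepsilon_n+\alpha_n\varepsilon_{n+1})+\sigma(\varphi_n\beta_{n-1}+\beta_n\varphi_{n+1})+q(\gamma_n\delta_n+\beta_{n-1}\varepsilon_n+\alpha_n\varphi_{n+1})=\gamma_n\delta_n+\beta_n\varepsilon_{n+1}+\varphi_n\alpha_{n-1}$. *)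

theory Defs
  imports Complex_Main
begin

primrec lam :: "real \<Rightarrow> real \<Rightarrow> real \<Rightarrow> nat \<Rightarrow> real" where
  "lam q \<sigma> \<tau> 0 = 0"
| "lam q \<sigma> \<tau> (Suc n) = (1 + q * lam q \<sigma> \<tau> n) / (1 - \<sigma> * \<tau> * lam q \<sigma> \<tau> n)"

end

theory Submission
  imports Defs
begin

theorem mainTheorem1:
  fixes \<sigma> \<tau> \<theta> \<eta> q :: real
    and \<alpha> \<beta> \<gamma> \<delta> \<epsilon> \<phi> :: "nat \<Rightarrow> real"
  assumes q: "-1 < q" "q \<le> 1"
    and wd: "\<And>n. 1 - \<sigma> * \<tau> * lam q \<sigma> \<tau> n \<noteq> 0"
    and lam_nz: "\<And>n. n \<ge> 1 \<Longrightarrow> lam q \<sigma> \<tau> n \<noteq> 0"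
    and E1: "\<And>n. \<tau> * \<alpha> n * \<alpha> (n+1) + q * \<alpha> n * \<beta> (n+1) + \<sigma> * \<beta> n * \<beta> (n+1)
                  = \<alpha> (n+1) * \<beta> n"
    and E2: "\<And>n. n \<ge> 2 \<Longrightarrow> \<tau> * \<epsilon> (n-1) * \<epsilon> n + q * \<epsilon> n * \<phi> (n-1) + \<sigma> * \<phi> n * \<phi> (n-1)
                  = \<epsilon> (n-1) * \<phi> n"
    and E3: "\<And>n. \<theta> * \<alpha> n + \<eta> * \<beta> n + \<tau> * \<alpha> n * (\<gamma> n + \<gamma> (n+1))
                  + \<sigma> * \<beta> n * (\<delta> n + \<delta> (n+1)) + q * (\<alpha> n * \<delta> (n+1) + \<beta> n * \<gamma> n)
                  = \<beta> n * \<gamma> (n+1) + \<alpha> n * \<delta> n"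
    and E4: "\<And>n. n \<ge> 1 \<Longrightarrow> \<theta> * \<epsilon> n + \<eta> * \<phi> n + \<tau> * \<epsilon> n * (\<gamma> n + \<gamma> (n-1))
                  + \<sigma> * \<phi> n * (\<delta> (n-1) + \<delta> n) + q * (\<phi> n * \<gamma> n + \<delta> (n-1) * \<epsilon> n)
                  = \<epsilon> n * \<delta> n + \<phi> n * \<gamma> (n-1)"
    and E5: "\<And>n. n \<ge> 1 \<Longrightarrow> 1 + \<theta> * \<gamma> n + \<eta> * \<delta> n + \<tau> * (\<gamma> n)^2 + \<sigma> * (\<delta> n)^2
                  + \<tau> * (\<alpha> (n-1) * \<epsilon> n + \<alpha> n * \<epsilon> (n+1))
                  + \<sigma> * (\<phi> n * \<beta> (n-1) + \<beta> n * \<phi> (n+1))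
                  + q * (\<gamma> n * \<delta> n + \<beta> (n-1) * \<epsilon> n + \<alpha> n * \<phi> (n+1))
                  = \<gamma> n * \<delta> n + \<beta> n * \<epsilon> (n+1) + \<phi> n * \<alpha> (n-1)"
    and init: "\<alpha> 0 = 0" "\<gamma> 0 = 0" "\<delta> 0 = 0" "\<phi> 1 = 0" "\<beta> 0 = 1" "\<epsilon> 1 = 1"
    and nz1: "\<And>n. (\<alpha> n, \<beta> n) \<noteq> (0, 0)"
    and nz2: "\<And>n. n \<ge> 1 \<Longrightarrow> (\<epsilon> n, \<phi> n) \<noteq> (0, 0)"
  shows "(\<forall>n. \<alpha> n = \<sigma> * lam q \<sigma> \<tau> n * \<beta> n)
       \<and> (\<forall>n\<ge>1. \<phi> n = \<tau> * lam q \<sigma> \<tau> (n-1) * \<epsilon> n)"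
proof -
  define L where "L = lam q \<sigma> \<tau>"
  have A: "\<alpha> n = \<sigma> * L n * \<beta> n" for n
  proof (induction n)
    case 0 then show ?case using init by (simp add: L_def)
  next
    case (Suc n)
    have bn: "\<beta> n \<noteq> 0" using Suc nz1[of n] by auto
    have w: "1 - \<sigma> * \<tau> * L n \<noteq> 0" using wd[of n] by (simp add: L_def)
    have e: "\<beta> n * (\<alpha> (Suc n) * (1 - \<sigma> * \<tau> * L n) - \<sigma> * \<beta> (Suc n) * (1 + q * L n)) = 0"
      using E1[of n] Suc by (simp add: algebra_simps)
    hence "\<alpha> (Suc n) * (1 - \<sigma> * \<tau> * L n) = \<sigma> * \<beta> (Suc n) * (1 + q * L n)" using bn by simp
    then show ?case using w by (simp add: L_def field_simps)
  qed
  have B: "\<phi> (Suc m) = \<tau> * L m * \<epsilon> (Suc m)" for m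
  proof (induction m)
    case 0 then show ?case using init by (simp add: L_def)
  next
    case (Suc m)
    have en: "\<epsilon> (Suc m) \<noteq> 0" using Suc nz2[of "Suc m"] by auto
    have w: "1 - \<sigma> * \<tau> * L m \<noteq> 0" using wd[of m] by (simp add: L_def)
    have e: "\<epsilon> (Suc m) * (\<phi> (Suc (Suc m)) * (1 - \<sigma> * \<tau> * L m) - \<tau> * \<epsilon> (Suc (Suc m)) * (1 + q * L m)) = 0"
      using E2[of "Suc (Suc m)"] Suc by (simp add: algebra_simps)
    hence "\<phi> (Suc (Suc m)) * (1 - \<sigma> * \<tau> * L m) = \<tau> * \<epsilon> (Suc (Suc m)) * (1 + q * L m)" using en by simp
    then show ?case using w by (simp add: L_def field_simps)
  qed
  show ?thesis
  proof (intro conjI allI impI)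
    fix n show "\<alpha> n = \<sigma> * lam q \<sigma> \<tau> n * \<beta> n" using A by (simp add: L_def)
  next
    fix n :: nat assume "n \<ge> 1"
    then obtain m where "n = Suc m" by (cases n) auto
    then show "\<phi> n = \<tau> * lam q \<sigma> \<tau> (n-1) * \<epsilon> n" using B by (simp add: L_def)
  qed
qed

end
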